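(* Let $n\ge 1$ and let $J\subseteq[n]$ be a $k$-element subset. Let $\pi,\hat\pi\in S_J$. Then the points $(\pi(1),\dots,\pi(n))$ and $(\hat\pi(1),\dots,\hat\pi(n))$ are joined by an edge of the bridge polytope $\mathrm{Br}_J$ if and only if there exist $i<\ell$ in $[n]$ such that $\hat\pi=(i\,\ell)\pi$ and $\pi(j)=\hat\pi(j)=j$ for every $j$ with $i<j<\ell$. In other words, $\pi$ and $\hat\pi$ differ by swapping the values $i$ and $\ell$, and each of $i+1,\dots,\ell-1$ is a fixed point of both $\pi$ and $\hat\pi$.
   Context: For $J\subseteq[n]=\{1,\dots,n\}$, let $S_J=\{\pi\in S_n:\ \pi(j)\ge j \text{ for all } j\in J,\ \pi(j)\le j \text{ for all } j\notin J\}$. The bridge polytope is $\mathrm{Br}_J=\operatorname{conv}\{(\pi(1),\dots,\pi(n)) : \pi\in S_J\}\subset\mathbb{R}^n$; each $\pi\in S_J$ is identified with the point $(\pi(1),\dots,\pi(n))$, and these points are the vertices of $\mathrm{Br}_J$. For a transposition $(i\,\ell)$ and $\pi\in S_n$, $(i\,\ell)\pi$ denotes the composition $(i\,\ell)\circ\pi$, i.e. the permutation obtained from $\pi$ by swapping the values $i$ and $\ell$. *)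

theory Defs
  imports "HOL-Analysis.Analysis" "HOL-Combinatorics.Transposition" "HOL-Combinatorics.Permutations"
begin

definition S_J :: "nat \<Rightarrow> nat set \<Rightarrow> (nat \<Rightarrow> nat) set" where
  "S_J n J = {\<pi>. \<pi> permutes {1..n} \<and> (\<forall>j\<in>J. j \<le> \<pi> j) \<and> (\<forall>j\<in>{1..n} - J. \<pi> j \<le> j)}"

text \<open>R^n is modelled as real^'n for a finite linearly ordered index type 'n with CARD('n) = n;
  coord_idx is the order isomorphism 'n -> {1..n}.\<close>
definition coord_idx :: "'n::{finite,linorder} \<Rightarrow> nat" where
  "coord_idx j = card {k. k < j} + 1"

definition perm_point :: "(nat \<Rightarrow> nat) \<Rightarrow> real ^ ('n::{finite,linorder})" where
  "perm_point \<pi> = (\<chi> j. real (\<pi> (coord_idx j)))"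

definition bridge_polytope :: "nat \<Rightarrow> nat set \<Rightarrow> (real ^ ('n::{finite,linorder})) set" where
  "bridge_polytope n J = convex hull (perm_point ` S_J n J)"

definition joined_by_edge :: "'a::real_vector set \<Rightarrow> 'a \<Rightarrow> 'a \<Rightarrow> bool" where
  "joined_by_edge P p q \<longleftrightarrow> p \<noteq> q \<and> closed_segment p q face_of P"

end

theory Submission
  imports Defs
begin


definition allowed :: "nat set \<Rightarrow> nat \<Rightarrow> nat \<Rightarrow> bool" where
  "allowed J x v \<longleftrightarrow> (x \<in> J \<longrightarrow> x \<le> v) \<and> (x \<notin> J \<longrightarrow> v \<le> x)"

definition cross :: "nat set \<Rightarrow> nat \<Rightarrow> nat \<Rightarrow> bool" where
  "cross J x t \<longleftrightarrow> (x \<in> J \<and> x < t) \<or> (x \<notin> J \<and> t \<le> x)"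

definition val :: "nat \<Rightarrow> (nat \<Rightarrow> real) \<Rightarrow> (nat \<Rightarrow> nat) \<Rightarrow> real" where
  "val n w s = (\<Sum>x\<in>{1..n}. w x * real (s x))"

lemma allowed_between:
  "allowed J x v1 \<Longrightarrow> allowed J x v2 \<Longrightarrow> v1 \<le> v \<Longrightarrow> v \<le> v2 \<Longrightarrow> allowed J x v"
  unfolding allowed_def by auto

lemma cross_intro:
  "allowed J x v1 \<Longrightarrow> allowed J x v2 \<Longrightarrow> v1 < t \<Longrightarrow> t \<le> v2 \<Longrightarrow> cross J x t"
  unfolding allowed_def cross_def by auto

lemma SJ_iff:
  assumes "J \<subseteq> {1..n}"
  shows "s \<in> S_J n J \<longleftrightarrow> s permutes {1..n} \<and> (\<forall>x\<in>{1..n}. allowed J x (s x))"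
  using assms unfolding S_J_def allowed_def by auto

lemma SJ_allowed: "J \<subseteq> {1..n} \<Longrightarrow> s \<in> S_J n J \<Longrightarrow> x \<in> {1..n} \<Longrightarrow> allowed J x (s x)"
  using SJ_iff by blast

lemma SJ_perm: "s \<in> S_J n J \<Longrightarrow> s permutes {1..n}"
  unfolding S_J_def by auto

lemma perm_range: "s permutes {1..n} \<Longrightarrow> x \<in> {1..n} \<Longrightarrow> s x \<in> {1..n}"
  by (rule permutes_in_image[THEN iffD2])

lemma perm_pre:
  assumes "s permutes {1..n}" "v \<in> {1..n}"
  obtains u where "u \<in> {1..n}" "s u = v"
  using permutes_image[OF assms(1)] assms(2) by (metis imageE)

lemma perm_inj: "s permutes S \<Longrightarrow> s x = s y \<Longrightarrow> x = y"
  using permutes_inj by (metis injD)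

lemma swap_in_SJ:
  assumes "J \<subseteq> {1..n}" "s \<in> S_J n J" "x \<in> {1..n}" "y \<in> {1..n}"
    "allowed J x (s y)" "allowed J y (s x)"
  shows "s \<circ> Transposition.transpose x y \<in> S_J n J"
proof -
  have "s \<circ> Transposition.transpose x y permutes {1..n}"
    by (rule permutes_compose[OF permutes_swap_id[OF assms(3,4)] SJ_perm[OF assms(2)]])
  moreover have "\<forall>z\<in>{1..n}. allowed J z ((s \<circ> Transposition.transpose x y) z)"
  proof
    fix z assume z: "z \<in> {1..n}"
    show "allowed J z ((s \<circ> Transposition.transpose x y) z)"
      using assms SJ_allowed[OF assms(1,2) z] by (cases "z = x"; cases "z = y") auto
  qed
  ultimately show ?thesis using SJ_iff[OF assms(1)] by blast
qed

lemma val_swap: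
  assumes "x \<in> {1..n}" "y \<in> {1..n}" "x \<noteq> y"
  shows "val n w (s \<circ> Transposition.transpose x y) = val n w s + (w x - w y) * (real (s y) - real (s x))"
proof -
  let ?g = "\<lambda>z. w z * real ((s \<circ> Transposition.transpose x y) z) - w z * real (s z)"
  have "(\<Sum>z\<in>{1..n}. ?g z) = (\<Sum>z\<in>{x,y}. ?g z)"
    by (rule sum.mono_neutral_right) (use assms in \<open>auto simp: transpose_def\<close>)
  also have "\<dots> = (w x - w y) * (real (s y) - real (s x))"
    using assms by (simp add: algebra_simps)
  finally have "(\<Sum>z\<in>{1..n}. ?g z) = (w x - w y) * (real (s y) - real (s x))" .
  moreover have "val n w (s \<circ> Transposition.transpose x y) - val n w s = (\<Sum>z\<in>{1..n}. ?g z)"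
    unfolding val_def by (simp only: sum_subtractf)
  ultimately show ?thesis by linarith
qed

lemma W_lemma:
  assumes J: "J \<subseteq> {1..n}" and s: "s \<in> S_J n J"
    and opt: "\<forall>\<tau>\<in>S_J n J. val n w \<tau> \<le> val n w s"
  shows "x \<in> {1..n} \<Longrightarrow> y \<in> {1..n} \<Longrightarrow> t \<le> s x \<Longrightarrow> s y < t \<Longrightarrow> cross J x t \<Longrightarrow> cross J y t
    \<Longrightarrow> w y \<le> w x"
proof (induction "s x - s y" arbitrary: x y t rule: less_induct)
  case less
  have sp: "s permutes {1..n}" using SJ_perm s .
  have al: "\<And>z. z \<in> {1..n} \<Longrightarrow> allowed J z (s z)" using SJ_allowed[OF J s] .
  show ?case
  proof (rule ccontr)
    assume "\<not> w y \<le> w x"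
    hence lt: "w x < w y" by simp
    have xy: "x \<noteq> y" using less by auto
    consider (A) "allowed J x (s y) \<and> allowed J y (s x)" | (B) "\<not> allowed J x (s y)"
      | (C) "\<not> allowed J y (s x)" by blast
    then show False
    proof cases
      case A
      have "s \<circ> Transposition.transpose x y \<in> S_J n J"
        using swap_in_SJ[OF J s less(2,3)] A by blast
      hence "val n w (s \<circ> Transposition.transpose x y) \<le> val n w s" using opt by blast
      moreover have "val n w (s \<circ> Transposition.transpose x y) = val n w s + (w x - w y) * (real (s y) - real (s x))"
        by (rule val_swap[OF less(2,3) xy])
      moreover have "(w x - w y) * (real (s y) - real (s x)) > 0"
        using lt less(4,5) by (intro mult_neg_neg) auto
      ultimately show False by linarith
    next
      case B
      have xJ: "x \<in> J" and syx: "s y < x" and xt: "x < t"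
        using B less(5,6) unfolding allowed_def cross_def by auto
      obtain u where u: "u \<in> {1..n}" "s u = x" using perm_pre[OF sp less(2)] by blast
      have ux: "u \<noteq> x" using u less(4) xt by auto
      have alu: "allowed J u x" using al[OF u(1)] u(2) by simp
      show False
      proof (cases "w x < w u")
        case True
        have "w u \<le> w x"
        proof (rule less.hyps[of x u "x+1"])
          show "s x - s u < s x - s y" using u(2) syx xt less(4) by linarith
          show "cross J x (x + 1)" using xJ unfolding cross_def by simp
          show "cross J u (x + 1)" using alu ux unfolding cross_def allowed_def by auto
        qed (use less u xt in auto)
        then show False using True by simp
      next
        case False
        have "w y \<le> w u"
        proof (rule less.hyps[of u y x])
          show "s u - s y < s x - s y" using u(2) syx xt less(4) by linarith
          show "cross J u x" using alu ux unfolding cross_def allowed_def by auto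
          show "cross J y x" using al[OF less(3)] less(7) xt syx unfolding cross_def allowed_def by auto
        qed (use less u syx in auto)
        then show False using False lt by simp
      qed
    next
      case C
      have yJ: "y \<notin> J" and sxy: "y < s x" and ty: "t \<le> y"
        using C less(4,5,7) unfolding allowed_def cross_def by auto
      obtain u where u: "u \<in> {1..n}" "s u = y" using perm_pre[OF sp less(3)] by blast
      have uy: "u \<noteq> y" using u less(5) ty by auto
      have alu: "allowed J u y" using al[OF u(1)] u(2) by simp
      show False
      proof (cases "w x < w u")
        case True
        have "w u \<le> w x"
        proof (rule less.hyps[of x u "y+1"])
          show "s x - s u < s x - s y" using u(2) sxy ty less(5) by linarith
          show "cross J x (y + 1)" using al[OF less(2)] less(6) ty sxy unfolding cross_def allowed_def by auto
          show "cross J u (y + 1)" using alu uy unfolding cross_def allowed_def by auto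
        qed (use less u sxy in auto)
        then show False using True by simp
      next
        case False
        have "w y \<le> w u"
        proof (rule less.hyps[of u y y])
          show "s u - s y < s x - s y" using u(2) sxy ty less(5) by linarith
          show "cross J u y" using alu uy unfolding cross_def allowed_def by auto
          show "cross J y y" using yJ unfolding cross_def by simp
        qed (use less u ty in auto)
        then show False using False lt by simp
      qed
    qed
  qed
qed

lemma perm_eqI:
  assumes "s permutes {1..n}" "r permutes {1..n}" "\<And>x. x \<in> {1..n} \<Longrightarrow> s x = r x"
  shows "s = r"
proof
  fix x show "s x = r x"
    using assms permutes_not_in[OF assms(1)] permutes_not_in[OF assms(2)] by (cases "x \<in> {1..n}") auto
qed

lemma comb_forward:
  assumes J: "J \<subseteq> {1..n}" and p: "\<pi> \<in> S_J n J" and q: "\<pi>' \<in> S_J n J" and ne: "\<pi> \<noteq> \<pi>'"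
    and vp: "val n w \<pi> = b" and vq: "val n w \<pi>' = b"
    and le: "\<forall>\<tau>\<in>S_J n J. val n w \<tau> \<le> b"
    and eq: "\<forall>\<tau>\<in>S_J n J. val n w \<tau> = b \<longrightarrow> \<tau> = \<pi> \<or> \<tau> = \<pi>'"
  shows "\<exists>i l. i \<in> {1..n} \<and> l \<in> {1..n} \<and> i < l \<and> \<pi>' = Transposition.transpose i l \<circ> \<pi> \<and>
                 (\<forall>j. i < j \<and> j < l \<longrightarrow> \<pi> j = j \<and> \<pi>' j = j)"
proof -
  have pp: "\<pi> permutes {1..n}" using SJ_perm p .
  have qp: "\<pi>' permutes {1..n}" using SJ_perm q .
  have optp: "\<forall>\<tau>\<in>S_J n J. val n w \<tau> \<le> val n w \<pi>" using le vp by simp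
  have optq: "\<forall>\<tau>\<in>S_J n J. val n w \<tau> \<le> val n w \<pi>'" using le vq by simp
  have alp: "\<And>z. z \<in> {1..n} \<Longrightarrow> allowed J z (\<pi> z)" using SJ_allowed[OF J p] .
  have alq: "\<And>z. z \<in> {1..n} \<Longrightarrow> allowed J z (\<pi>' z)" using SJ_allowed[OF J q] .
  define D where "D = {x\<in>{1..n}. \<pi> x \<noteq> \<pi>' x}"
  have Dne: "D \<noteq> {}"
  proof
    assume "D = {}"
    hence "\<pi> = \<pi>'" by (intro perm_eqI[OF pp qp]) (auto simp: D_def)
    with ne show False by simp
  qed
  have Dfin: "finite D" by (simp add: D_def)
  define i where "i = Min (\<pi> ` D)"
  have "i \<in> \<pi> ` D" unfolding i_def using Dne Dfin by (intro Min_in) auto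
  then obtain z where zD: "z \<in> D" and zi: "\<pi> z = i" by auto
  have hmin: "\<And>x. x \<in> D \<Longrightarrow> i \<le> \<pi> x" unfolding i_def using Dfin by auto
  have z1: "z \<in> {1..n}" and zne: "\<pi> z \<noteq> \<pi>' z" using zD by (auto simp: D_def)
  have i1: "i \<in> {1..n}" using perm_range[OF pp z1] zi by simp
  obtain y where y1: "y \<in> {1..n}" and yi: "\<pi>' y = i" using perm_pre[OF qp i1] by blast
  have yz: "y \<noteq> z" using yi zi zne by auto
  have yD: "y \<in> D"
  proof -
    have "\<pi> y \<noteq> \<pi>' y"
    proof
      assume "\<pi> y = \<pi>' y"
      hence "\<pi> y = \<pi> z" using yi zi by simp
      hence "y = z" by (rule perm_inj[OF pp])
      with yz show False ..
    qed
    thus ?thesis using y1 by (simp add: D_def)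
  qed
  have piy: "i < \<pi> y"
  proof -
    have "i \<le> \<pi> y" using hmin[OF yD] .
    moreover have "\<pi> y \<noteq> i" using perm_inj[OF pp, of y z] yz zi by auto
    ultimately show ?thesis by simp
  qed
  have qiz: "i < \<pi>' z"
  proof -
    obtain x' where x'1: "x' \<in> {1..n}" and x'e: "\<pi> x' = \<pi>' z"
      using perm_pre[OF pp perm_range[OF qp z1]] by blast
    have "\<pi> x' \<noteq> \<pi>' x'"
    proof
      assume "\<pi> x' = \<pi>' x'"
      hence "\<pi>' x' = \<pi>' z" using x'e by simp
      hence "x' = z" by (rule perm_inj[OF qp])
      thus False using x'e zne by simp
    qed
    hence "x' \<in> D" using x'1 by (simp add: D_def)
    hence "i \<le> \<pi>' z" using hmin x'e by metis
    moreover have "\<pi>' z \<noteq> i" using perm_inj[OF qp, of z y] yz yi by auto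
    ultimately show ?thesis by simp
  qed
  have alz1: "allowed J z i" using alp[OF z1] zi by simp
  have alz2: "allowed J z (\<pi>' z)" using alq[OF z1] .
  have aly1: "allowed J y i" using alq[OF y1] yi by simp
  have aly2: "allowed J y (\<pi> y)" using alp[OF y1] .
  have w1: "w z \<le> w y"
    by (rule W_lemma[OF J p optp y1 z1, of "i+1"])
       (use piy zi cross_intro[OF aly1 aly2, of "i+1"] cross_intro[OF alz1 alz2, of "i+1"] qiz in auto)
  have w2: "w y \<le> w z"
    by (rule W_lemma[OF J q optq z1 y1, of "i+1"])
       (use qiz yi cross_intro[OF aly1 aly2, of "i+1"] cross_intro[OF alz1 alz2, of "i+1"] piy in auto)
  have weq: "w y = w z" using w1 w2 by simp
  have qeq: "\<pi>' = \<pi> \<circ> Transposition.transpose y z"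
  proof (cases "\<pi> y \<le> \<pi>' z")
    case True
    have "allowed J z (\<pi> y)" by (rule allowed_between[OF alz1 alz2]) (use True piy in auto)
    hence sJ: "\<pi> \<circ> Transposition.transpose y z \<in> S_J n J"
      using swap_in_SJ[OF J p y1 z1] aly1 zi by simp
    have "val n w (\<pi> \<circ> Transposition.transpose y z) = b"
      using val_swap[OF y1 z1 yz, of w \<pi>] weq vp by simp
    hence "\<pi> \<circ> Transposition.transpose y z = \<pi> \<or> \<pi> \<circ> Transposition.transpose y z = \<pi>'"
      using eq sJ by blast
    moreover have "\<pi> \<circ> Transposition.transpose y z \<noteq> \<pi>"
    proof
      assume "\<pi> \<circ> Transposition.transpose y z = \<pi>"
      hence "\<pi> z = \<pi> y" by (metis comp_apply transpose_apply_first)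
      thus False using piy zi by simp
    qed
    ultimately show ?thesis by simp
  next
    case False
    have "allowed J y (\<pi>' z)" by (rule allowed_between[OF aly1 aly2]) (use False qiz in auto)
    hence sJ: "\<pi>' \<circ> Transposition.transpose y z \<in> S_J n J"
      using swap_in_SJ[OF J q y1 z1] alz1 yi by simp
    have "val n w (\<pi>' \<circ> Transposition.transpose y z) = b"
      using val_swap[OF y1 z1 yz, of w \<pi>'] weq vq by simp
    hence "\<pi>' \<circ> Transposition.transpose y z = \<pi> \<or> \<pi>' \<circ> Transposition.transpose y z = \<pi>'"
      using eq sJ by blast
    moreover have "\<pi>' \<circ> Transposition.transpose y z \<noteq> \<pi>'"
    proof
      assume "\<pi>' \<circ> Transposition.transpose y z = \<pi>'"
      hence "\<pi>' z = \<pi>' y" by (metis comp_apply transpose_apply_first)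
      thus False using qiz yi by simp
    qed
    ultimately have "\<pi>' \<circ> Transposition.transpose y z = \<pi>" by simp
    hence "\<pi>' \<circ> Transposition.transpose y z \<circ> Transposition.transpose y z = \<pi> \<circ> Transposition.transpose y z"
      by simp
    thus ?thesis by (simp add: comp_assoc)
  qed
  define l where "l = \<pi> y"
  have l1: "l \<in> {1..n}" unfolding l_def using perm_range[OF pp y1] .
  have il: "i < l" using piy l_def by simp
  have qz: "\<pi>' z = l" using qeq l_def by simp
  have qy: "\<pi>' y = i" using yi .
  have qeq2: "\<pi>' = Transposition.transpose i l \<circ> \<pi>"
  proof
    fix x
    show "\<pi>' x = (Transposition.transpose i l \<circ> \<pi>) x"
    proof (cases "x = y \<or> x = z")
      case True
      then show ?thesis using qeq zi l_def il by (auto simp: transpose_def)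
    next
      case False
      have "\<pi> x \<noteq> i" using perm_inj[OF pp, of x z] zi False by auto
      moreover have "\<pi> x \<noteq> l" using perm_inj[OF pp, of x y] l_def False by auto
      ultimately show ?thesis using qeq False by (simp add: transpose_def)
    qed
  qed
  have mid: "\<pi> j = j \<and> \<pi>' j = j" if ij: "i < j" "j < l" for j
  proof -
    have pj: "\<pi> j = j"
    proof (rule ccontr)
      assume pjne: "\<pi> j \<noteq> j"
      have j1: "j \<in> {1..n}" using i1 l1 ij by auto
      obtain u where u1: "u \<in> {1..n}" and uj: "\<pi> u = j" using perm_pre[OF pp j1] by blast
      have unj: "u \<noteq> j" using uj pjne by auto
      have uz: "u \<noteq> z" using uj zi ij by auto
      have uy: "u \<noteq> y" using uj l_def ij by auto
      have alu: "allowed J u j" using alp[OF u1] uj by simp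
      have cu1: "cross J u j" using alu unj unfolding allowed_def cross_def by auto
      have cu2: "cross J u (j+1)" using alu unj unfolding allowed_def cross_def by auto
      have alz2': "allowed J z l" using alz2 qz by simp
      have cz: "cross J z j" by (rule cross_intro[OF alz1 alz2']) (use ij in auto)
      have cy: "cross J y (j+1)" by (rule cross_intro[OF aly1 aly2]) (use ij l_def in auto)
      have "w z \<le> w u"
        by (rule W_lemma[OF J p optp u1 z1, of j]) (use uj zi ij cu1 cz in auto)
      moreover have "w u \<le> w y"
        by (rule W_lemma[OF J p optp y1 u1, of "j+1"]) (use uj l_def ij cu2 cy in auto)
      ultimately have wu: "w u = w y" "w u = w z" using weq by auto
      have qu: "\<pi>' u = j" using qeq uj uy uz by simp
      show False
      proof (cases "u \<in> J")
        case True
        have a1: "allowed J u (\<pi> y)" using True alu ij l_def unfolding allowed_def by auto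
        have a2: "allowed J y (\<pi> u)" by (rule allowed_between[OF aly1 aly2]) (use uj ij l_def in auto)
        have sJ: "\<pi> \<circ> Transposition.transpose u y \<in> S_J n J"
          by (rule swap_in_SJ[OF J p u1 y1 a1 a2])
        have "val n w (\<pi> \<circ> Transposition.transpose u y) = b"
          using val_swap[OF u1 y1 uy, of w \<pi>] wu vp by simp
        hence "\<pi> \<circ> Transposition.transpose u y = \<pi> \<or> \<pi> \<circ> Transposition.transpose u y = \<pi>'"
          using eq sJ by blast
        moreover have "(\<pi> \<circ> Transposition.transpose u y) u = l" using l_def by simp
        ultimately show False using uj qu ij by (metis less_irrefl)
      next
        case False
        have a1: "allowed J u (\<pi> z)" using False alu ij zi unfolding allowed_def by auto
        have a2: "allowed J z (\<pi> u)" by (rule allowed_between[OF alz1 alz2']) (use uj ij in auto)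
        have sJ: "\<pi> \<circ> Transposition.transpose u z \<in> S_J n J"
          by (rule swap_in_SJ[OF J p u1 z1 a1 a2])
        have "val n w (\<pi> \<circ> Transposition.transpose u z) = b"
          using val_swap[OF u1 z1 uz, of w \<pi>] wu vp by simp
        hence "\<pi> \<circ> Transposition.transpose u z = \<pi> \<or> \<pi> \<circ> Transposition.transpose u z = \<pi>'"
          using eq sJ by blast
        moreover have "(\<pi> \<circ> Transposition.transpose u z) u = i" using zi by simp
        ultimately show False using uj qu ij by (metis less_irrefl)
      qed
    qed
    moreover have "\<pi>' j = j" using qeq2 pj ij by (simp add: transpose_def)
    ultimately show ?thesis by simp
  qed
  show ?thesis using i1 l1 il qeq2 mid by blast
qed

lemma sum_distinct_lower:
  fixes B :: "nat set"
  assumes "finite B" "0 \<notin> B"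
  shows "\<Sum>{1..card B} \<le> \<Sum>B \<and> (\<Sum>B = \<Sum>{1..card B} \<longrightarrow> B = {1..card B})"
  using assms
proof (induction "card B" arbitrary: B)
  case 0
  then show ?case by simp
next
  case (Suc k)
  have Bne: "B \<noteq> {}" using Suc.hyps(2) by auto
  define m where "m = Max B"
  have mB: "m \<in> B" unfolding m_def using Bne Suc.prems by simp
  define B' where "B' = B - {m}"
  have cB': "card B' = k" unfolding B'_def using Suc.hyps(2) mB Suc.prems by simp
  have IH: "\<Sum>{1..k} \<le> \<Sum>B' \<and> (\<Sum>B' = \<Sum>{1..k} \<longrightarrow> B' = {1..k})"
    using Suc.hyps(1)[of B'] cB' Suc.prems unfolding B'_def by auto
  have sub: "B \<subseteq> {1..m}" unfolding m_def using Suc.prems by (auto intro: Max_ge) (metis Suc_leI gr0I)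
  have mge: "Suc k \<le> m" using card_mono[OF _ sub] Suc.hyps(2) by simp
  have sB: "\<Sum>B = m + \<Sum>B'" unfolding B'_def using Suc.prems mB by (simp add: sum.remove)
  have s1: "\<Sum>{1..Suc k} = \<Sum>{1..k} + Suc k" by simp
  show ?case
  proof
    show "\<Sum>{1..card B} \<le> \<Sum>B" using IH mge sB s1 Suc.hyps(2)[symmetric] by simp
    show "\<Sum>B = \<Sum>{1..card B} \<longrightarrow> B = {1..card B}"
    proof
      assume "\<Sum>B = \<Sum>{1..card B}"
      hence e: "m + \<Sum>B' = \<Sum>{1..k} + Suc k" using sB s1 Suc.hyps(2)[symmetric] by simp
      hence "m = Suc k" "\<Sum>B' = \<Sum>{1..k}" using IH mge by linarith+
      hence "B' = {1..k}" "m = Suc k" using IH by auto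
      hence "B = insert (Suc k) {1..k}" unfolding B'_def using mB by auto
      thus "B = {1..card B}" using Suc.hyps(2)[symmetric] by auto
    qed
  qed
qed

lemma lower_img:
  fixes s :: "nat \<Rightarrow> nat"
  assumes "s permutes {1..n}" "t \<le> n"
  shows "s ` {x\<in>{1..n}. s x \<le> t} = {1..t}"
proof
  show "s ` {x\<in>{1..n}. s x \<le> t} \<subseteq> {1..t}" using perm_range[OF assms(1)] by auto
  show "{1..t} \<subseteq> s ` {x\<in>{1..n}. s x \<le> t}"
  proof
    fix v assume v: "v \<in> {1..t}"
    hence "v \<in> {1..n}" using v assms(2) by auto
    then obtain u where "u \<in> {1..n}" "s u = v" using perm_pre[OF assms(1)] by blast
    thus "v \<in> s ` {x\<in>{1..n}. s x \<le> t}" using v by auto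
  qed
qed

lemma inj_on_perm: "s permutes S \<Longrightarrow> inj_on s A"
  using permutes_inj by (metis inj_on_subset subset_UNIV)

lemma lower_card:
  fixes p :: "nat \<Rightarrow> nat"
  assumes "p permutes {1..n}" "t \<le> n"
  shows "card {x\<in>{1..n}. p x \<le> t} = t"
proof -
  have "card (p ` {x\<in>{1..n}. p x \<le> t}) = card {x\<in>{1..n}. p x \<le> t}"
    by (rule card_image[OF inj_on_perm[OF assms(1)]])
  thus ?thesis using lower_img[OF assms] by simp
qed

lemma level_sum_img:
  assumes "s permutes S"
  shows "(\<Sum>x\<in>A. int (s x)) = int (\<Sum>(s ` A))"
proof -
  have "\<Sum>(s ` A) = (\<Sum>x\<in>A. s x)" by (simp add: sum.reindex[OF inj_on_perm[OF assms]])
  thus ?thesis by simp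
qed

lemma level_ineq:
  fixes p s :: "nat \<Rightarrow> nat"
  assumes pp: "p permutes {1..n}" and sp: "s permutes {1..n}" and t: "t \<le> n"
  shows "int (\<Sum>{1..t}) \<le> (\<Sum>x\<in>{x\<in>{1..n}. p x \<le> t}. int (s x))
    \<and> ((\<Sum>x\<in>{x\<in>{1..n}. p x \<le> t}. int (s x)) = int (\<Sum>{1..t}) \<longrightarrow> s ` {x\<in>{1..n}. p x \<le> t} = {1..t})"
proof -
  let ?A = "{x\<in>{1..n}. p x \<le> t}"
  have cB: "card (s ` ?A) = t"
    using card_image[OF inj_on_perm[OF sp], of ?A] lower_card[OF pp t] by simp
  have "0 \<notin> s ` ?A" using perm_range[OF sp] by force
  hence L: "\<Sum>{1..t} \<le> \<Sum>(s ` ?A) \<and> (\<Sum>(s ` ?A) = \<Sum>{1..t} \<longrightarrow> s ` ?A = {1..t})"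
    using sum_distinct_lower[of "s ` ?A"] cB by simp
  show ?thesis unfolding level_sum_img[OF sp] of_nat_le_iff of_nat_eq_iff using L by blast
qed

lemma comb_backward:
  assumes J: "J \<subseteq> {1..n}" and p: "\<pi> \<in> S_J n J" and q: "\<pi>' \<in> S_J n J"
    and i1: "i \<in> {1..n}" and l1: "l \<in> {1..n}" and il: "i < l"
    and qeq: "\<pi>' = Transposition.transpose i l \<circ> \<pi>"
    and mid: "\<forall>j. i < j \<and> j < l \<longrightarrow> \<pi> j = j \<and> \<pi>' j = j"
  shows "\<exists>c::nat\<Rightarrow>int. \<exists>b. (\<forall>\<sigma>\<in>S_J n J. b \<le> (\<Sum>x\<in>{1..n}. c x * int (\<sigma> x)))
     \<and> (\<Sum>x\<in>{1..n}. c x * int (\<pi> x)) = b \<and> (\<Sum>x\<in>{1..n}. c x * int (\<pi>' x)) = b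
     \<and> (\<forall>\<sigma>\<in>S_J n J. (\<Sum>x\<in>{1..n}. c x * int (\<sigma> x)) = b \<longrightarrow> \<sigma> = \<pi> \<or> \<sigma> = \<pi>')"
proof -
  have pp: "\<pi> permutes {1..n}" using SJ_perm p .
  have qp: "\<pi>' permutes {1..n}" using SJ_perm q .
  define T where "T = {t\<in>{1..n}. t < i \<or> l \<le> t}"
  define A where "A t = {x\<in>{1..n}. \<pi> x \<le> t}" for t
  define Mid where "Mid = {i<..<l}"
  define m where "m j = (if j \<in> J then 1 else -1 :: int)" for j
  define \<Phi> where "\<Phi> \<sigma> = (\<Sum>t\<in>T. \<Sum>x\<in>A t. int (\<sigma> x)) + (\<Sum>j\<in>Mid. m j * int (\<sigma> j))" for \<sigma> :: "nat \<Rightarrow> nat"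
  define \<Phi>0 where "\<Phi>0 = (\<Sum>t\<in>T. int (\<Sum>{1..t})) + (\<Sum>j\<in>Mid. m j * int j)"
  define c where "c x = int (card {t\<in>T. \<pi> x \<le> t}) + (if x \<in> Mid then m x else 0)" for x
  have Tfin: "finite T" unfolding T_def by simp
  have Tn: "\<And>t. t \<in> T \<Longrightarrow> t \<le> n" unfolding T_def by auto
  have Midn: "Mid \<subseteq> {1..n}" unfolding Mid_def using i1 l1 by auto
  have coef: "(\<Sum>x\<in>{1..n}. c x * int (\<sigma> x)) = \<Phi> \<sigma>" for \<sigma> :: "nat \<Rightarrow> nat"
  proof -
    have e1: "int (card {t\<in>T. \<pi> x \<le> t}) = (\<Sum>t\<in>T. if \<pi> x \<le> t then 1 else 0)" for x
    proof -
      have "{t\<in>T. \<pi> x \<le> t} = T \<inter> {t. \<pi> x \<le> t}" by auto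
      thus ?thesis using Tfin by (simp add: sum.If_cases)
    qed
    have pw: "c x * int (\<sigma> x) = (\<Sum>t\<in>T. if \<pi> x \<le> t then int (\<sigma> x) else 0)
        + (if x \<in> Mid then m x * int (\<sigma> x) else 0)" for x
    proof -
      have "(\<Sum>t\<in>T. if \<pi> x \<le> t then 1 else 0) * int (\<sigma> x) = (\<Sum>t\<in>T. if \<pi> x \<le> t then int (\<sigma> x) else 0)"
        unfolding sum_distrib_right by (rule sum.cong) auto
      thus ?thesis unfolding c_def e1 by (simp add: distrib_right)
    qed
    have "(\<Sum>x\<in>{1..n}. c x * int (\<sigma> x)) =
        (\<Sum>x\<in>{1..n}. \<Sum>t\<in>T. if \<pi> x \<le> t then int (\<sigma> x) else 0)
        + (\<Sum>x\<in>{1..n}. if x \<in> Mid then m x * int (\<sigma> x) else 0)"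
      unfolding pw by (rule sum.distrib)
    also have "(\<Sum>x\<in>{1..n}. \<Sum>t\<in>T. if \<pi> x \<le> t then int (\<sigma> x) else 0)
        = (\<Sum>t\<in>T. \<Sum>x\<in>A t. int (\<sigma> x))"
      by (subst sum.swap, rule sum.cong[OF refl], unfold A_def, rule sum.inter_filter[symmetric]) simp
    also have "(\<Sum>x\<in>{1..n}. if x \<in> Mid then m x * int (\<sigma> x) else 0) = (\<Sum>j\<in>Mid. m j * int (\<sigma> j))"
      using sum.inter_restrict[of "{1..n}" "\<lambda>j. m j * int (\<sigma> j)" Mid] Int_absorb2[OF Midn] by (simp add: Int_commute)
    finally show ?thesis unfolding \<Phi>_def .
  qed
  have lev: "\<And>\<sigma> t. \<sigma> \<in> S_J n J \<Longrightarrow> t \<in> T \<Longrightarrow> int (\<Sum>{1..t}) \<le> (\<Sum>x\<in>A t. int (\<sigma> x))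
      \<and> ((\<Sum>x\<in>A t. int (\<sigma> x)) = int (\<Sum>{1..t}) \<longrightarrow> \<sigma> ` A t = {1..t})"
    unfolding A_def using level_ineq[OF pp SJ_perm Tn] by blast
  have midle: "\<And>\<sigma> j. \<sigma> \<in> S_J n J \<Longrightarrow> j \<in> Mid \<Longrightarrow> m j * int j \<le> m j * int (\<sigma> j)
      \<and> (m j * int j = m j * int (\<sigma> j) \<longrightarrow> \<sigma> j = j)"
  proof -
    fix \<sigma> j assume s: "\<sigma> \<in> S_J n J" and j: "j \<in> Mid"
    have "allowed J j (\<sigma> j)" using SJ_allowed[OF J s] j Midn by auto
    thus "m j * int j \<le> m j * int (\<sigma> j) \<and> (m j * int j = m j * int (\<sigma> j) \<longrightarrow> \<sigma> j = j)"
      unfolding m_def allowed_def by auto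
  qed
  have P1: "\<And>\<sigma>. \<sigma> \<in> S_J n J \<Longrightarrow> (\<Sum>t\<in>T. int (\<Sum>{1..t})) \<le> (\<Sum>t\<in>T. \<Sum>x\<in>A t. int (\<sigma> x))"
    by (rule sum_mono) (use lev in blast)
  have P2: "\<And>\<sigma>. \<sigma> \<in> S_J n J \<Longrightarrow> (\<Sum>j\<in>Mid. m j * int j) \<le> (\<Sum>j\<in>Mid. m j * int (\<sigma> j))"
    by (rule sum_mono) (use midle in blast)
  have lower: "\<And>\<sigma>. \<sigma> \<in> S_J n J \<Longrightarrow> \<Phi>0 \<le> \<Phi> \<sigma>"
    unfolding \<Phi>_def \<Phi>0_def using P1 P2 by (simp add: add_mono)
  have img_eq: "\<And>\<sigma> t. \<sigma> permutes {1..n} \<Longrightarrow> \<sigma> ` A t = {1..t} \<Longrightarrow> (\<Sum>x\<in>A t. int (\<sigma> x)) = int (\<Sum>{1..t})"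
    using level_sum_img by metis
  have pimg: "\<And>t. t \<in> T \<Longrightarrow> \<pi> ` A t = {1..t}" unfolding A_def using lower_img[OF pp] Tn by blast
  have qimg: "\<And>t. t \<in> T \<Longrightarrow> \<pi>' ` A t = {1..t}"
  proof -
    fix t assume t: "t \<in> T"
    have "\<pi>' ` A t = Transposition.transpose i l ` (\<pi> ` A t)" unfolding qeq by (simp add: image_comp)
    also have "\<dots> = {1..t}" unfolding pimg[OF t] using t i1 il unfolding T_def
      by (intro transpose_image_eq) auto
    finally show "\<pi>' ` A t = {1..t}" .
  qed
  have Pp: "\<Phi> \<pi> = \<Phi>0"
  proof -
    have "(\<Sum>t\<in>T. \<Sum>x\<in>A t. int (\<pi> x)) = (\<Sum>t\<in>T. int (\<Sum>{1..t}))"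
      by (rule sum.cong) (use img_eq[OF pp] pimg in auto)
    moreover have "(\<Sum>j\<in>Mid. m j * int (\<pi> j)) = (\<Sum>j\<in>Mid. m j * int j)"
      by (rule sum.cong) (use mid in \<open>auto simp: Mid_def\<close>)
    ultimately show ?thesis unfolding \<Phi>_def \<Phi>0_def by simp
  qed
  have Pq: "\<Phi> \<pi>' = \<Phi>0"
  proof -
    have "(\<Sum>t\<in>T. \<Sum>x\<in>A t. int (\<pi>' x)) = (\<Sum>t\<in>T. int (\<Sum>{1..t}))"
      by (rule sum.cong) (use img_eq[OF qp] qimg in auto)
    moreover have "(\<Sum>j\<in>Mid. m j * int (\<pi>' j)) = (\<Sum>j\<in>Mid. m j * int j)"
      by (rule sum.cong) (use mid in \<open>auto simp: Mid_def\<close>)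
    ultimately show ?thesis unfolding \<Phi>_def \<Phi>0_def by simp
  qed
  have uniq: "\<sigma> = \<pi> \<or> \<sigma> = \<pi>'" if s: "\<sigma> \<in> S_J n J" and e: "\<Phi> \<sigma> = \<Phi>0" for \<sigma>
  proof -
    have sp: "\<sigma> permutes {1..n}" using SJ_perm s .
    have E1: "(\<Sum>t\<in>T. int (\<Sum>{1..t})) = (\<Sum>t\<in>T. \<Sum>x\<in>A t. int (\<sigma> x))"
      and E2: "(\<Sum>j\<in>Mid. m j * int j) = (\<Sum>j\<in>Mid. m j * int (\<sigma> j))"
      using P1[OF s] P2[OF s] e unfolding \<Phi>_def \<Phi>0_def by linarith+
    have Lv: "\<sigma> ` A t = {1..t}" if t: "t \<in> T \<or> t = 0" for t
    proof (cases "t = 0")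
      case True
      have "A 0 = {}" unfolding A_def using perm_range[OF pp] by force
      thus ?thesis using True by simp
    next
      case False
      hence tT: "t \<in> T" using t by simp
      have "int (\<Sum>{1..t}) = (\<Sum>x\<in>A t. int (\<sigma> x))"
        by (rule sum_mono_inv[OF E1 _ tT Tfin]) (use lev[OF s] in blast)
      thus ?thesis using lev[OF s tT] by simp
    qed
    have Mj: "\<sigma> j = j" if j: "j \<in> Mid" for j
    proof -
      have "m j * int j = m j * int (\<sigma> j)"
        by (rule sum_mono_inv[OF E2 _ j]) (use midle[OF s] in \<open>auto simp: Mid_def\<close>)
      thus ?thesis using midle[OF s j] by simp
    qed
    have stepv: "\<sigma> x = v" if x1: "x \<in> {1..n}" and xv: "\<pi> x = v" and v1: "1 \<le> v"
      and L1: "\<sigma> ` A v = {1..v}" and L2: "\<sigma> ` A (v - 1) = {1..v-1}" for x v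
    proof -
      have "x \<in> A v" unfolding A_def using x1 xv by simp
      hence sv: "\<sigma> x \<in> {1..v}" using L1 by blast
      show ?thesis
      proof (rule ccontr)
        assume "\<sigma> x \<noteq> v"
        hence "\<sigma> x \<in> {1..v-1}" using sv by auto
        then obtain x' where x': "x' \<in> A (v-1)" "\<sigma> x' = \<sigma> x" using L2 by (metis imageE)
        hence "x' = x" using perm_inj[OF sp] by blast
        thus False using x' xv v1 unfolding A_def by auto
      qed
    qed
    obtain z where z1: "z \<in> {1..n}" and zi: "\<pi> z = i" using perm_pre[OF pp i1] by blast
    obtain y where y1: "y \<in> {1..n}" and yl: "\<pi> y = l" using perm_pre[OF pp l1] by blast
    have agree: "\<sigma> x = \<pi> x" if x1: "x \<in> {1..n}" and xz: "x \<noteq> z" and xy: "x \<noteq> y" for x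
    proof -
      have v1: "\<pi> x \<in> {1..n}" using perm_range[OF pp x1] .
      have ni: "\<pi> x \<noteq> i" using perm_inj[OF pp, of x z] zi xz by auto
      have nl: "\<pi> x \<noteq> l" using perm_inj[OF pp, of x y] yl xy by auto
      consider "\<pi> x < i" | "l < \<pi> x" | "i < \<pi> x \<and> \<pi> x < l" using ni nl by linarith
      then show ?thesis
      proof cases
        case 1
        have a: "\<pi> x \<in> T" using v1 1 by (auto simp: T_def)
        have b: "\<pi> x - 1 \<in> T \<or> \<pi> x - 1 = 0" using v1 1 by (auto simp: T_def)
        show ?thesis
          by (rule stepv[OF x1 refl _ Lv[OF disjI1[OF a]] Lv[OF b]]) (use v1 in auto)
      next
        case 2
        have a: "\<pi> x \<in> T" using v1 2 by (auto simp: T_def)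
        have b: "\<pi> x - 1 \<in> T" using v1 2 l1 by (auto simp: T_def)
        show ?thesis
          by (rule stepv[OF x1 refl _ Lv[OF disjI1[OF a]] Lv[OF disjI1[OF b]]]) (use v1 in auto)
      next
        case 3
        have "\<pi> (\<pi> x) = \<pi> x" using mid 3 by blast
        hence "\<pi> x = x" using perm_inj[OF pp] by blast
        moreover have "\<sigma> x = x" using Mj 3 \<open>\<pi> x = x\<close> unfolding Mid_def by (metis greaterThanLessThan_iff)
        ultimately show ?thesis by simp
      qed
    qed
    have yz: "y \<noteq> z" using zi yl il by auto
    have vals: "\<sigma> u = i \<or> \<sigma> u = l" if u: "u = z \<or> u = y" for u
    proof -
      have u1: "u \<in> {1..n}" using u z1 y1 by auto
      obtain x' where x'1: "x' \<in> {1..n}" and x'e: "\<pi> x' = \<sigma> u" using perm_pre[OF pp perm_range[OF sp u1]] by blast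
      show ?thesis
      proof (cases "x' = z \<or> x' = y")
        case True thus ?thesis using x'e zi yl by auto
      next
        case False
        hence "\<sigma> x' = \<sigma> u" using agree[OF x'1] x'e by auto
        hence "x' = u" using perm_inj[OF sp] by blast
        thus ?thesis using False u by auto
      qed
    qed
    have szy: "\<sigma> z \<noteq> \<sigma> y" using perm_inj[OF sp, of z y] yz by auto
    have qz: "\<pi>' z = l" "\<pi>' y = i" using qeq zi yl by auto
    have qag: "\<pi>' x = \<pi> x" if "x \<noteq> z" "x \<noteq> y" for x
    proof -
      have "\<pi> x \<noteq> i" using perm_inj[OF pp, of x z] zi that by auto
      moreover have "\<pi> x \<noteq> l" using perm_inj[OF pp, of x y] yl that by auto
      ultimately show ?thesis using qeq by (simp add: transpose_def)
    qed
    consider "\<sigma> z = i" "\<sigma> y = l" | "\<sigma> z = l" "\<sigma> y = i" using vals szy by blast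
    then show ?thesis
    proof cases
      case 1
      have "\<sigma> = \<pi>" by (rule perm_eqI[OF sp pp]) (metis agree 1 zi yl)
      thus ?thesis ..
    next
      case 2
      have "\<sigma> = \<pi>'" by (rule perm_eqI[OF sp qp]) (use agree 2 qz qag in \<open>metis\<close>)
      thus ?thesis ..
    qed
  qed
  show ?thesis
    by (rule exI[of _ c], rule exI[of _ \<Phi>0]) (use coef lower Pp Pq uniq in auto)
qed



lemma coord_idx_mono:
  fixes j j' :: "'n::{finite,linorder}"
  assumes "j < j'" shows "coord_idx j < coord_idx j'"
proof -
  have "{k. k < j} \<subset> {k. k < j'}" using assms by auto
  hence "card {k. k < j} < card {k. k < j'}" by (rule psubset_card_mono[rotated]) simp
  thus ?thesis unfolding coord_idx_def by simp
qed

lemma coord_idx_bij: "bij_betw (coord_idx :: 'n::{finite,linorder} \<Rightarrow> nat) UNIV {1..CARD('n::{finite,linorder})}"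
proof -
  have inj: "inj (coord_idx :: 'n::{finite,linorder} \<Rightarrow> nat)"
  proof (rule injI)
    fix a b :: "'n::{finite,linorder}" assume e: "coord_idx a = coord_idx b"
    show "a = b"
    proof (cases a b rule: linorder_cases)
      case less thus ?thesis using coord_idx_mono[OF less] e by simp
    next
      case greater thus ?thesis using coord_idx_mono[OF greater] e by simp
    qed simp
  qed
  have sub: "range (coord_idx :: 'n::{finite,linorder} \<Rightarrow> nat) \<subseteq> {1..CARD('n::{finite,linorder})}"
  proof
    fix x assume "x \<in> range (coord_idx :: 'n::{finite,linorder} \<Rightarrow> nat)"
    then obtain j :: "'n::{finite,linorder}" where x: "x = coord_idx j" by auto
    have "{k. k < j} \<subset> UNIV" by auto
    hence "card {k. k < j} < CARD('n::{finite,linorder})" by (rule psubset_card_mono[rotated]) simp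
    thus "x \<in> {1..CARD('n::{finite,linorder})}" unfolding x coord_idx_def by simp
  qed
  have "card (range (coord_idx :: 'n::{finite,linorder} \<Rightarrow> nat)) = CARD('n::{finite,linorder})" using card_image[OF inj] by simp
  hence "range (coord_idx :: 'n::{finite,linorder} \<Rightarrow> nat) = {1..CARD('n::{finite,linorder})}"
    using card_subset_eq[OF _ sub] by simp
  thus ?thesis using inj by (simp add: bij_betw_def)
qed

lemma sum_coord:
  fixes f :: "nat \<Rightarrow> real"
  shows "(\<Sum>k\<in>(UNIV::'n::{finite,linorder} set). f (coord_idx k)) = (\<Sum>x\<in>{1..CARD('n::{finite,linorder})}. f x)"
  by (rule sum.reindex_bij_betw[OF coord_idx_bij])

lemma inner_perm_point:
  shows "inner (a :: real ^ ('n::{finite,linorder})) (perm_point s :: real ^ 'n::{finite,linorder}) =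
    (\<Sum>x\<in>{1..CARD('n::{finite,linorder})}. a $ (inv_into UNIV (coord_idx :: 'n::{finite,linorder} \<Rightarrow> nat) x) * real (s x))"
proof -
  have inj: "inj (coord_idx :: 'n::{finite,linorder} \<Rightarrow> nat)" using coord_idx_bij bij_betw_def by blast
  have "inner a (perm_point s :: real ^ 'n::{finite,linorder}) = (\<Sum>k\<in>UNIV. a $ k * real (s (coord_idx k)))"
    unfolding inner_vec_def perm_point_def by simp
  also have "\<dots> = (\<Sum>k\<in>(UNIV::'n::{finite,linorder} set). (\<lambda>x. a $ (inv_into UNIV (coord_idx :: 'n::{finite,linorder} \<Rightarrow> nat) x) * real (s x)) (coord_idx k))"
    using inv_into_f_f[OF inj] by simp
  also have "\<dots> = (\<Sum>x\<in>{1..CARD('n::{finite,linorder})}. a $ (inv_into UNIV (coord_idx :: 'n::{finite,linorder} \<Rightarrow> nat) x) * real (s x))"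
    by (rule sum_coord)
  finally show ?thesis .
qed

lemma inner_perm_point2:
  fixes c :: "nat \<Rightarrow> real"
  shows "inner ((\<chi> k. c (coord_idx k)) :: real ^ ('n::{finite,linorder})) (perm_point s :: real ^ 'n::{finite,linorder}) =
    (\<Sum>x\<in>{1..CARD('n::{finite,linorder})}. c x * real (s x))"
proof -
  have "inner ((\<chi> k. c (coord_idx k)) :: real ^ 'n::{finite,linorder}) (perm_point s :: real ^ 'n::{finite,linorder})
     = (\<Sum>k\<in>(UNIV::'n::{finite,linorder} set). (\<lambda>x. c x * real (s x)) (coord_idx k))"
    unfolding inner_vec_def perm_point_def by simp
  also have "\<dots> = (\<Sum>x\<in>{1..CARD('n::{finite,linorder})}. c x * real (s x))" by (rule sum_coord)
  finally show ?thesis .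
qed

lemma perm_point_inj:
  assumes "s permutes {1..CARD('n::{finite,linorder})}" "r permutes {1..CARD('n::{finite,linorder})}"
    and e: "(perm_point s :: real ^ 'n::{finite,linorder}) = perm_point r"
  shows "s = r"
proof
  fix x
  show "s x = r x"
  proof (cases "x \<in> {1..CARD('n::{finite,linorder})}")
    case True
    then obtain k :: "'n::{finite,linorder}" where k: "coord_idx k = x" using coord_idx_bij
      by (metis bij_betw_def imageE)
    have "(perm_point s :: real ^ 'n::{finite,linorder}) $ k = (perm_point r :: real ^ 'n::{finite,linorder}) $ k" using e by simp
    thus ?thesis unfolding perm_point_def using k by simp
  next
    case False
    thus ?thesis using permutes_not_in[OF assms(1)] permutes_not_in[OF assms(2)] by simp
  qed
qed

lemma perm_point_sq:
  assumes "s permutes {1..CARD('n::{finite,linorder})}"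
  shows "inner (perm_point s :: real ^ 'n::{finite,linorder}) (perm_point s) = (\<Sum>x\<in>{1..CARD('n::{finite,linorder})}. real x * real x)"
proof -
  have "inner (perm_point s :: real ^ 'n::{finite,linorder}) (perm_point s) = (\<Sum>k\<in>(UNIV::'n::{finite,linorder} set). (\<lambda>x. real (s x) * real (s x)) (coord_idx k))"
    unfolding inner_vec_def perm_point_def by simp
  also have "\<dots> = (\<Sum>x\<in>{1..CARD('n::{finite,linorder})}. real (s x) * real (s x))" by (rule sum_coord)
  also have "\<dots> = (\<Sum>x\<in>{1..CARD('n::{finite,linorder})}. real x * real x)"
    using sum.permute[OF assms, of "\<lambda>x. real x * real x"] by (simp add: comp_def)
  finally show ?thesis .
qed

lemma segment_sphere:
  fixes p q x :: "'a::real_inner"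
  assumes x: "x \<in> closed_segment p q" and e1: "inner x x = inner p p" and e2: "inner q q = inner p p"
  shows "x = p \<or> x = q"
proof -
  obtain u where u: "0 \<le> u" "u \<le> 1" and xe: "x = (1 - u) *\<^sub>R p + u *\<^sub>R q"
    using x unfolding closed_segment_def by auto
  let ?K = "inner p p" and ?m = "inner p q"
  have "inner x x = (1-u)*(1-u)*?K + 2*u*(1-u)*?m + u*u*inner q q"
    unfolding xe by (simp add: inner_add_left inner_add_right inner_commute algebra_simps power2_eq_square)
  hence "u*(1-u)*(?m - ?K) = 0" using e1 e2 by (simp add: algebra_simps)
  hence "u = 0 \<or> u = 1 \<or> ?m = ?K" by auto
  moreover have "?m = ?K \<Longrightarrow> p = q"
  proof -
    assume m: "?m = ?K"
    have "inner (p - q) (p - q) = 0" using m e2 by (simp add: inner_diff_left inner_diff_right inner_commute)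
    thus "p = q" by simp
  qed
  ultimately show ?thesis using xe by auto
qed

lemma hull_hyperplane:
  fixes V :: "'a::real_inner set"
  assumes fin: "finite V" and ge: "\<And>v. v \<in> V \<Longrightarrow> b \<le> inner a v"
    and x: "x \<in> convex hull V" and xb: "inner a x = b"
  shows "x \<in> convex hull {v\<in>V. inner a v = b}"
proof -
  obtain u where u0: "\<forall>v\<in>V. 0 \<le> u v" and u1: "sum u V = 1" and xs: "(\<Sum>v\<in>V. u v *\<^sub>R v) = x"
    using x unfolding convex_hull_finite[OF fin] by blast
  have "inner a x = (\<Sum>v\<in>V. u v * inner a v)" unfolding xs[symmetric] by (simp add: inner_sum_right)
  hence "(\<Sum>v\<in>V. u v * (inner a v - b)) = 0" using xb u1
    by (simp add: algebra_simps sum_subtractf sum_distrib_right[symmetric])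
  hence z: "\<forall>v\<in>V. u v * (inner a v - b) = 0"
    using sum_nonneg_eq_0_iff[OF fin, of "\<lambda>v. u v * (inner a v - b)"] u0 ge by auto
  let ?W = "{v\<in>V. inner a v = b}"
  have uz: "\<And>v. v \<in> V - ?W \<Longrightarrow> u v = 0" using z by auto
  have finW: "finite ?W" using fin by simp
  have s1: "sum u ?W = 1"
    using u1 sum.mono_neutral_left[OF fin, of ?W u] uz by auto
  have s2: "(\<Sum>v\<in>?W. u v *\<^sub>R v) = x"
    using xs sum.mono_neutral_left[OF fin, of ?W "\<lambda>v. u v *\<^sub>R v"] uz by auto
  show ?thesis unfolding convex_hull_finite[OF finW] using u0 s1 s2 by auto
qed



theorem theorem3p4:
  fixes n k :: nat and J :: "nat set" and \<pi> \<pi>' :: "nat \<Rightarrow> nat"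
  assumes "CARD('n) = n"
    and "n \<ge> 1"
    and "J \<subseteq> {1..n}" and "card J = k"
    and "\<pi> \<in> S_J n J" and "\<pi>' \<in> S_J n J"
  shows "joined_by_edge (bridge_polytope n J :: (real ^ 'n::{finite,linorder}) set) (perm_point \<pi>) (perm_point \<pi>')
    \<longleftrightarrow> (\<exists>i l. i \<in> {1..n} \<and> l \<in> {1..n} \<and> i < l \<and> \<pi>' = Transposition.transpose i l \<circ> \<pi> \<and>
                 (\<forall>j. i < j \<and> j < l \<longrightarrow> \<pi> j = j \<and> \<pi>' j = j))"
proof -
  note nC = assms(1)
  have J: "J \<subseteq> {1..n}" by (rule assms(3))
  have p: "\<pi> \<in> S_J n J" and q: "\<pi>' \<in> S_J n J" using assms(5,6) .
  define V where "V = (perm_point ` S_J n J :: (real ^ 'n::{finite,linorder}) set)"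
  define P where "P = (perm_point \<pi> :: real ^ 'n::{finite,linorder})"
  define Q where "Q = (perm_point \<pi>' :: real ^ 'n::{finite,linorder})"
  have finS: "finite (S_J n J)"
    by (rule finite_subset[OF _ finite_permutations[of "{1..n}"]]) (auto simp: S_J_def)
  have finV: "finite V" unfolding V_def using finS by simp
  have BP: "bridge_polytope n J = convex hull V" unfolding V_def bridge_polytope_def by simp
  have PV: "P \<in> V" and QV: "Q \<in> V" unfolding V_def P_def Q_def using p q by auto
  define K where "K = (\<Sum>x\<in>{1..n}. real x * real x)"
  have sph: "\<And>s. s \<in> S_J n J \<Longrightarrow> inner (perm_point s :: real ^ 'n::{finite,linorder}) (perm_point s) = K"
    unfolding K_def using perm_point_sq[where 'n="'n::{finite,linorder}"] SJ_perm nC by metis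
  have injpp: "\<And>s r. s \<in> S_J n J \<Longrightarrow> r \<in> S_J n J \<Longrightarrow> (perm_point s :: real ^ 'n::{finite,linorder}) = perm_point r \<Longrightarrow> s = r"
    using perm_point_inj[where 'n="'n::{finite,linorder}"] SJ_perm nC by metis
  show ?thesis
  proof
    assume edge: "joined_by_edge (bridge_polytope n J :: (real ^ 'n::{finite,linorder}) set) (perm_point \<pi>) (perm_point \<pi>')"
    hence pq: "P \<noteq> Q" and face: "closed_segment P Q face_of convex hull V"
      unfolding joined_by_edge_def BP P_def Q_def by auto
    have "polyhedron (convex hull V)" by (rule polytope_imp_polyhedron[OF polytope_convex_hull[OF finV]])
    hence "closed_segment P Q exposed_face_of convex hull V" using face exposed_face_of_polyhedron by blast
    then obtain a b where ab1: "convex hull V \<subseteq> {x. inner a x \<le> b}"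
      and ab2: "closed_segment P Q = convex hull V \<inter> {x. inner a x = b}"
      unfolding exposed_face_of_def by blast
    define w where "w x = a $ (inv_into UNIV (coord_idx :: 'n::{finite,linorder} \<Rightarrow> nat) x)" for x
    have valeq: "\<And>s. val n w s = inner a (perm_point s :: real ^ 'n::{finite,linorder})"
      unfolding val_def w_def using inner_perm_point[where 'n="'n::{finite,linorder}"] nC by metis
    have "P \<in> closed_segment P Q" "Q \<in> closed_segment P Q" by auto
    hence vp: "val n w \<pi> = b" and vq: "val n w \<pi>' = b" using ab2 valeq unfolding P_def Q_def by auto
    have le: "\<forall>\<tau>\<in>S_J n J. val n w \<tau> \<le> b"
    proof
      fix \<tau> assume "\<tau> \<in> S_J n J"
      hence "perm_point \<tau> \<in> convex hull V" unfolding V_def by (auto intro: hull_inc)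
      thus "val n w \<tau> \<le> b" using ab1 valeq by auto
    qed
    have eq: "\<forall>\<tau>\<in>S_J n J. val n w \<tau> = b \<longrightarrow> \<tau> = \<pi> \<or> \<tau> = \<pi>'"
    proof (intro ballI impI)
      fix \<tau> assume t: "\<tau> \<in> S_J n J" and vt: "val n w \<tau> = b"
      hence "perm_point \<tau> \<in> convex hull V" unfolding V_def by (auto intro: hull_inc)
      hence "perm_point \<tau> \<in> closed_segment P Q" using ab2 vt valeq by auto
      hence "perm_point \<tau> = P \<or> perm_point \<tau> = Q"
        by (rule segment_sphere) (use sph t p q in \<open>auto simp: P_def Q_def\<close>)
      thus "\<tau> = \<pi> \<or> \<tau> = \<pi>'" using injpp t p q unfolding P_def Q_def by blast
    qed
    have ne: "\<pi> \<noteq> \<pi>'" using pq unfolding P_def Q_def by auto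
    show "\<exists>i l. i \<in> {1..n} \<and> l \<in> {1..n} \<and> i < l \<and> \<pi>' = Transposition.transpose i l \<circ> \<pi> \<and>
                 (\<forall>j. i < j \<and> j < l \<longrightarrow> \<pi> j = j \<and> \<pi>' j = j)"
      by (rule comb_forward[OF J p q ne vp vq le eq])
  next
    assume "\<exists>i l. i \<in> {1..n} \<and> l \<in> {1..n} \<and> i < l \<and> \<pi>' = Transposition.transpose i l \<circ> \<pi> \<and>
                 (\<forall>j. i < j \<and> j < l \<longrightarrow> \<pi> j = j \<and> \<pi>' j = j)"
    then obtain i l where i1: "i \<in> {1..n}" and l1: "l \<in> {1..n}" and il: "i < l"
      and qeq: "\<pi>' = Transposition.transpose i l \<circ> \<pi>"
      and mid: "\<forall>j. i < j \<and> j < l \<longrightarrow> \<pi> j = j \<and> \<pi>' j = j" by blast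
    obtain c b0 where cb1: "\<forall>\<sigma>\<in>S_J n J. b0 \<le> (\<Sum>x\<in>{1..n}. c x * int (\<sigma> x))"
      and cb2: "(\<Sum>x\<in>{1..n}. c x * int (\<pi> x)) = b0" and cb3: "(\<Sum>x\<in>{1..n}. c x * int (\<pi>' x)) = b0"
      and cb4: "\<forall>\<sigma>\<in>S_J n J. (\<Sum>x\<in>{1..n}. c x * int (\<sigma> x)) = b0 \<longrightarrow> \<sigma> = \<pi> \<or> \<sigma> = \<pi>'"
      using comb_backward[OF J p q i1 l1 il qeq mid] by blast
    define a where "a = ((\<chi> k. real_of_int (c (coord_idx k))) :: real ^ 'n::{finite,linorder})"
    have aeq: "\<And>s. inner a (perm_point s :: real ^ 'n::{finite,linorder}) = real_of_int (\<Sum>x\<in>{1..n}. c x * int (s x))"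
    proof -
      fix s :: "nat \<Rightarrow> nat"
      have "inner a (perm_point s :: real ^ 'n::{finite,linorder}) = (\<Sum>x\<in>{1..n}. real_of_int (c x) * real (s x))"
        unfolding a_def using inner_perm_point2[where 'n="'n::{finite,linorder}", of "\<lambda>x. real_of_int (c x)" s] nC by simp
      thus "inner a (perm_point s :: real ^ 'n::{finite,linorder}) = real_of_int (\<Sum>x\<in>{1..n}. c x * int (s x))" by simp
    qed
    define B where "B = real_of_int b0"
    have geV: "V \<subseteq> {x. B \<le> inner a x}"
    proof
      fix v assume "v \<in> V"
      then obtain s where s: "s \<in> S_J n J" "v = perm_point s" unfolding V_def by auto
      have "b0 \<le> (\<Sum>x\<in>{1..n}. c x * int (s x))" using cb1 s(1) by blast
      hence "B \<le> real_of_int (\<Sum>x\<in>{1..n}. c x * int (s x))" unfolding B_def by (simp only: of_int_le_iff)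
      thus "v \<in> {x. B \<le> inner a x}" by (simp only: mem_Collect_eq s(2) aeq)
    qed
    have hullge: "convex hull V \<subseteq> {x. B \<le> inner a x}"
      by (rule hull_minimal[OF geV]) (rule convex_halfspace_ge)
    have face: "(convex hull V \<inter> {x. inner a x = B}) face_of convex hull V"
      by (rule face_of_Int_supporting_hyperplane_ge) (use hullge in auto)
    have W: "{v\<in>V. inner a v = B} = {P, Q}"
    proof
      show "{v\<in>V. inner a v = B} \<subseteq> {P, Q}"
      proof
        fix v assume "v \<in> {v\<in>V. inner a v = B}"
        then obtain s where s: "s \<in> S_J n J" "v = perm_point s" "inner a (perm_point s :: real ^ 'n::{finite,linorder}) = B"
          unfolding V_def by auto
        have "real_of_int (\<Sum>x\<in>{1..n}. c x * int (s x)) = real_of_int b0" using s(3) unfolding aeq B_def .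
        hence "(\<Sum>x\<in>{1..n}. c x * int (s x)) = b0" by (simp only: of_int_eq_iff)
        hence "s = \<pi> \<or> s = \<pi>'" using cb4 s(1) by blast
        thus "v \<in> {P, Q}" using s(2) P_def Q_def by auto
      qed
      have aP: "inner a P = B" by (simp only: P_def aeq cb2 B_def)
      have aQ: "inner a Q = B" by (simp only: Q_def aeq cb3 B_def)
      show "{P, Q} \<subseteq> {v\<in>V. inner a v = B}" using PV QV aP aQ by auto
    qed
    have seg: "convex hull V \<inter> {x. inner a x = B} = closed_segment P Q"
    proof
      show "convex hull V \<inter> {x. inner a x = B} \<subseteq> closed_segment P Q"
      proof
        fix x assume x: "x \<in> convex hull V \<inter> {x. inner a x = B}"
        have "x \<in> convex hull {v\<in>V. inner a v = B}"
          by (rule hull_hyperplane[OF finV]) (use geV x in auto)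
        thus "x \<in> closed_segment P Q" unfolding W segment_convex_hull .
      qed
      have "closed_segment P Q \<subseteq> convex hull V"
        unfolding segment_convex_hull using PV QV by (intro hull_mono) auto
      moreover have "closed_segment P Q \<subseteq> {x. inner a x = B}"
        unfolding segment_convex_hull
        by (rule hull_minimal) (use W in blast, simp add: convex_hyperplane)
      ultimately show "closed_segment P Q \<subseteq> convex hull V \<inter> {x. inner a x = B}" by auto
    qed
    have pq: "P \<noteq> Q"
    proof
      assume "P = Q"
      hence "\<pi> = \<pi>'" using injpp p q unfolding P_def Q_def by blast
      moreover obtain z where "\<pi> z = i" using perm_pre[OF SJ_perm[OF p] i1] by blast
      ultimately show False using qeq il by (metis comp_apply less_irrefl transpose_apply_first)
    qed
    show "joined_by_edge (bridge_polytope n J :: (real ^ 'n::{finite,linorder}) set) (perm_point \<pi>) (perm_point \<pi>')"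
      unfolding joined_by_edge_def BP using pq face seg unfolding P_def Q_def by simp
  qed
qed

end
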